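(* Let $-\pi/2<\alpha<\pi/2$ and $\lambda<1$. Then $$\{J[f]: f\in \mathcal{S}^*_\alpha(\lambda)\}=\{I_{e^{-i\alpha}\cos\alpha}[k]: k\in\mathcal{K}(\lambda)\}.$$
   Context: $\mathbb{D}$ is the open unit disk and $\mathcal{A}$ the class of analytic $f$ on $\mathbb{D}$ with $f(0)=0$, $f'(0)=1$. For $\alpha\in(-\pi/2,\pi/2)$ and $\lambda<1$, $\mathcal{S}^*_\alpha(\lambda)=\{f\in\mathcal{A}: f(z)\neq 0 \text{ for } z\in\mathbb{D}\setminus\{0\},\ \mathrm{Re}\,(e^{i\alpha}zf'(z)/f(z))>\lambda\cos\alpha \text{ on }\mathbb{D}\}$. $\mathcal{K}(\lambda)=\{f\in\mathcal{A}: f'\neq0,\ \mathrm{Re}\,(1+zf''(z)/f'(z))>\lambda \text{ on }\mathbb{D}\}$. The Alexander transform is $J[f](z)=\int_0^z f(w)/w\,dw$. For $\gamma\in\mathbb{C}$ and $f\in\mathcal{A}$ with $f'$ nonvanishing, $I_\gamma[f](z)=\int_0^z\{f'(w)\}^\gamma dw$ with the branch of $\{f'(w)\}^\gamma=\exp(\gamma\log f'(w))$ chosen so that $\{f'(0)\}^\gamma=1$. *)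

theory Defs
  imports "HOL-Complex_Analysis.Complex_Analysis"
begin

abbreviation unit_disk :: "complex set" where
  "unit_disk \<equiv> ball 0 1"

definition class_A :: "(complex \<Rightarrow> complex) set" where
  "class_A = {f. f holomorphic_on unit_disk \<and> f 0 = 0 \<and> deriv f 0 = 1}"

text \<open>The quotient z f'(z)/f(z) has a removable
  singularity at 0 (value 1); the condition is imposed at the points z ~= 0, where the
  quotient is literally defined (at 0 it holds automatically since lambda < 1).\<close>
definition spirallike :: "real \<Rightarrow> real \<Rightarrow> (complex \<Rightarrow> complex) set" where
  "spirallike \<alpha> lam = {f. f \<in> class_A \<and>
     (\<forall>z\<in>unit_disk - {0}. f z \<noteq> 0) \<and>
     (\<forall>z\<in>unit_disk - {0}. Re (exp (\<i> * of_real \<alpha>) * z * deriv f z / f z) > lam * cos \<alpha>)}"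

definition convex_order :: "real \<Rightarrow> (complex \<Rightarrow> complex) set" where
  "convex_order lam = {f. f \<in> class_A \<and>
     (\<forall>z\<in>unit_disk. deriv f z \<noteq> 0) \<and>
     (\<forall>z\<in>unit_disk. Re (1 + z * deriv (deriv f) z / deriv f z) > lam)}"

definition alexander :: "(complex \<Rightarrow> complex) \<Rightarrow> complex \<Rightarrow> complex" where
  "alexander f z = contour_integral (linepath 0 z) (\<lambda>w. f w / w)"

text \<open>The branch of log f' on the disk vanishing at 0.\<close>
definition log_deriv_branch :: "(complex \<Rightarrow> complex) \<Rightarrow> complex \<Rightarrow> complex" where
  "log_deriv_branch f = (SOME L. L holomorphic_on unit_disk \<and> L 0 = 0 \<and>
       (\<forall>w\<in>unit_disk. exp (L w) = deriv f w))"

text \<open>I_gamma[f](z) = integral from 0 to z of (f'(w))^gamma dw.\<close>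
definition I_transform :: "complex \<Rightarrow> (complex \<Rightarrow> complex) \<Rightarrow> complex \<Rightarrow> complex" where
  "I_transform \<gamma> f z = contour_integral (linepath 0 z) (\<lambda>w. exp (\<gamma> * log_deriv_branch f w))"

end

theory Submission
  imports Defs
begin

lemma primitive0:
  assumes h: "h holomorphic_on unit_disk" and z: "z \<in> unit_disk"
  shows "((\<lambda>z. contour_integral (linepath 0 z) h) has_field_derivative h z) (at z)"
proof -
  have "((\<lambda>z. contour_integral (linepath 0 z) h) has_field_derivative h z) (at z within unit_disk)"
  proof (rule triangle_contour_integrals_convex_primitive)
    show "continuous_on unit_disk h" using h holomorphic_on_imp_continuous_on by blast
    show "(0::complex) \<in> unit_disk" by simp
    show "convex unit_disk" by (rule convex_ball)
    show "z \<in> unit_disk" by (rule z)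
    fix b c assume b: "b \<in> unit_disk" and c: "c \<in> unit_disk"
    have "(h has_contour_integral 0) (linepath 0 b +++ linepath b c +++ linepath c 0)"
    proof (rule Cauchy_theorem_convex_simple[OF h convex_ball])
      show "valid_path (linepath 0 b +++ linepath b c +++ linepath c 0)"
        by (intro valid_path_join valid_path_linepath) simp_all
      have "closed_segment 0 b \<subseteq> unit_disk" "closed_segment b c \<subseteq> unit_disk" "closed_segment c 0 \<subseteq> unit_disk"
        using b c by (simp_all add: closed_segment_subset)
      then show "path_image (linepath 0 b +++ linepath b c +++ linepath c 0) \<subseteq> unit_disk"
        by (simp add: path_image_join)
      show "pathfinish (linepath 0 b +++ linepath b c +++ linepath c 0) = pathstart (linepath 0 b +++ linepath b c +++ linepath c 0)"
        by simp
    qed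
    then show "contour_integral (linepath 0 b) h + contour_integral (linepath b c) h +
                       contour_integral (linepath c 0) h = 0"
      by (rule has_chain_integral_chain_integral3)
  qed
  then show ?thesis using at_within_open[OF z open_ball] by simp
qed

lemma log_exists0:
  assumes h: "h holomorphic_on unit_disk" and nz: "\<And>w. w \<in> unit_disk \<Longrightarrow> h w \<noteq> 0" and h0: "h 0 = 1"
  shows "\<exists>L. L holomorphic_on unit_disk \<and> L 0 = 0 \<and> (\<forall>w\<in>unit_disk. exp (L w) = h w)"
proof -
  obtain g where g: "g holomorphic_on unit_disk" "\<And>x. x \<in> unit_disk \<Longrightarrow> exp (g x) = h x"
    using holomorphic_logarithm_exists[of unit_disk h 0] h nz by auto
  have e0: "exp (g 0) = 1" using g(2)[of 0] h0 by simp
  show ?thesis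
  proof (intro exI conjI ballI)
    show "(\<lambda>w. g w - g 0) holomorphic_on unit_disk" using g(1) by (intro holomorphic_intros)
    show "g 0 - g 0 = 0" by simp
    fix w assume "w \<in> unit_disk"
    then show "exp (g w - g 0) = h w" using g(2) e0 by (simp add: exp_diff)
  qed
qed

lemma deriv_exp_comp:
  assumes L: "L holomorphic_on unit_disk" and F: "\<And>w. w \<in> unit_disk \<Longrightarrow> F w = exp (L w)"
    and z: "z \<in> unit_disk"
  shows "(F has_field_derivative (deriv L z * exp (L z))) (at z)"
proof -
  have "(L has_field_derivative deriv L z) (at z)" using holomorphic_derivI[OF L _ z] by auto
  then have "((\<lambda>w. exp (L w)) has_field_derivative (exp (L z) * deriv L z)) (at z)"
    by (auto intro!: derivative_eq_intros)
  then have "((\<lambda>w. exp (L w)) has_field_derivative (deriv L z * exp (L z))) (at z)"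
    by (simp add: mult.commute)
  then show ?thesis
    by (rule has_field_derivative_transform_within_open[OF _ open_ball z]) (simp add: F)
qed

lemma log_unique:
  assumes L1: "L1 holomorphic_on unit_disk" and L2: "L2 holomorphic_on unit_disk"
    and e: "\<And>w. w \<in> unit_disk \<Longrightarrow> exp (L1 w) = exp (L2 w)" and z0: "L1 0 = L2 0"
  shows "\<And>w. w \<in> unit_disk \<Longrightarrow> L1 w = L2 w"
proof -
  have d: "deriv L1 w = deriv L2 w" if w: "w \<in> unit_disk" for w
  proof -
    have "((\<lambda>w. exp (L1 w)) has_field_derivative (deriv L1 w * exp (L1 w))) (at w)"
      by (rule deriv_exp_comp[OF L1 _ w]) auto
    moreover have "((\<lambda>w. exp (L1 w)) has_field_derivative (deriv L2 w * exp (L2 w))) (at w)"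
      by (rule deriv_exp_comp[OF L2 _ w]) (use e in auto)
    ultimately have "deriv L1 w * exp (L1 w) = deriv L2 w * exp (L2 w)" by (rule DERIV_unique)
    then show ?thesis using e[OF w] by simp
  qed
  have "\<exists>c. \<forall>x\<in>unit_disk. L1 x - L2 x = c"
  proof (rule has_field_derivative_zero_constant)
    fix x assume x: "x \<in> unit_disk"
    have "((\<lambda>x. L1 x - L2 x) has_field_derivative (deriv L1 x - deriv L2 x)) (at x)"
      using holomorphic_derivI[OF L1 _ x] holomorphic_derivI[OF L2 _ x]
      by (auto intro!: derivative_eq_intros)
    then show "((\<lambda>x. L1 x - L2 x) has_field_derivative 0) (at x within unit_disk)"
      using d[OF x] by (simp add: has_field_derivative_at_within)
  qed auto
  then obtain c where c: "\<forall>x\<in>unit_disk. L1 x - L2 x = c" by blast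
  then have "c = 0" using z0 by (metis centre_in_ball right_minus_eq zero_less_one)
  then show "\<And>w. w \<in> unit_disk \<Longrightarrow> L1 w = L2 w" using c by auto
qed

lemma ldb:
  assumes h: "deriv f holomorphic_on unit_disk" and nz: "\<And>w. w \<in> unit_disk \<Longrightarrow> deriv f w \<noteq> 0"
    and h0: "deriv f 0 = 1"
  shows "log_deriv_branch f holomorphic_on unit_disk \<and> log_deriv_branch f 0 = 0 \<and>
         (\<forall>w\<in>unit_disk. exp (log_deriv_branch f w) = deriv f w)"
proof -
  have "\<exists>L. L holomorphic_on unit_disk \<and> L 0 = 0 \<and> (\<forall>w\<in>unit_disk. exp (L w) = deriv f w)"
    by (rule log_exists0[OF h nz h0])
  then show ?thesis unfolding log_deriv_branch_def by (rule someI_ex)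
qed

lemma alg1:
  fixes \<alpha> lam :: real and q :: complex
  assumes c: "cos \<alpha> > 0"
    and h: "Re (exp (\<i> * of_real \<alpha>) * (1 + q)) > lam * cos \<alpha>"
  shows "Re (1 + q / (exp (- (\<i> * of_real \<alpha>)) * of_real (cos \<alpha>))) > lam"
proof -
  have e: "q / (exp (- (\<i> * of_real \<alpha>)) * of_real (cos \<alpha>)) = exp (\<i> * of_real \<alpha>) * q / of_real (cos \<alpha>)"
    using c by (simp add: exp_minus field_simps)
  have r: "Re (exp (\<i> * of_real \<alpha>)) = cos \<alpha>" by (simp add: Re_exp)
  have "Re (exp (\<i> * of_real \<alpha>) * (1 + q)) = cos \<alpha> + Re (exp (\<i> * of_real \<alpha>) * q)"
    using r by (simp add: distrib_left)
  with h have "cos \<alpha> + Re (exp (\<i> * of_real \<alpha>) * q) > lam * cos \<alpha>" by simp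
  then have "1 + Re (exp (\<i> * of_real \<alpha>) * q) / cos \<alpha> > lam"
    using c by (simp add: field_simps)
  then show ?thesis unfolding e by (simp add: Re_divide_of_real)
qed

lemma alg2:
  fixes \<alpha> lam :: real and q :: complex
  assumes c: "cos \<alpha> > 0" and h: "Re (1 + q) > lam"
  shows "Re (exp (\<i> * of_real \<alpha>) * (1 + exp (- (\<i> * of_real \<alpha>)) * of_real (cos \<alpha>) * q)) > lam * cos \<alpha>"
proof -
  have r: "Re (exp (\<i> * of_real \<alpha>)) = cos \<alpha>" by (simp add: Re_exp)
  have e1: "exp (\<i> * of_real \<alpha>) * exp (- (\<i> * of_real \<alpha>)) = 1" by (simp add: exp_minus)
  have "exp (\<i> * of_real \<alpha>) * (1 + exp (- (\<i> * of_real \<alpha>)) * of_real (cos \<alpha>) * q)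
        = exp (\<i> * of_real \<alpha>) + (exp (\<i> * of_real \<alpha>) * exp (- (\<i> * of_real \<alpha>))) * of_real (cos \<alpha>) * q"
    by (simp add: algebra_simps)
  then have "exp (\<i> * of_real \<alpha>) * (1 + exp (- (\<i> * of_real \<alpha>)) * of_real (cos \<alpha>) * q)
        = exp (\<i> * of_real \<alpha>) + of_real (cos \<alpha>) * q" by (simp only: e1 mult_1_left)
  then have "Re (exp (\<i> * of_real \<alpha>) * (1 + exp (- (\<i> * of_real \<alpha>)) * of_real (cos \<alpha>) * q))
       = Re (exp (\<i> * of_real \<alpha>) + of_real (cos \<alpha>) * q)" by (simp only:)
  also have "\<dots> = cos \<alpha> * (1 + Re q)" using r by (simp add: algebra_simps)
  finally have "Re (exp (\<i> * of_real \<alpha>) * (1 + exp (- (\<i> * of_real \<alpha>)) * of_real (cos \<alpha>) * q))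
       = cos \<alpha> * (1 + Re q)" .
  moreover have "cos \<alpha> * (1 + Re q) > cos \<alpha> * lam" using c h by simp
  ultimately show ?thesis by (simp add: mult.commute)
qed

lemma spike0:
  assumes "\<And>w. w \<noteq> 0 \<Longrightarrow> F w = G w"
  shows "contour_integral (linepath 0 z) F = contour_integral (linepath 0 z) G"
proof (cases "z = 0")
  case True then show ?thesis by simp
next
  case False
  show ?thesis
    by (rule contour_integral_spike_finite_simple_path[where A="{0}"]) (use False assms in auto)
qed

lemma dir1:
  fixes \<alpha> lam :: real
  assumes c: "cos \<alpha> > 0" and f: "f \<in> spirallike \<alpha> lam" and lam: "lam < 1"
  defines "\<gamma> \<equiv> exp (- (\<i> * of_real \<alpha>)) * of_real (cos \<alpha>)"
  shows "\<exists>k\<in>convex_order lam. restrict (alexander f) unit_disk = restrict (I_transform \<gamma> k) unit_disk"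
proof -
  have g0: "\<gamma> \<noteq> 0" using c unfolding \<gamma>_def by simp
  have fh: "f holomorphic_on unit_disk" and f0: "f 0 = 0" and df0: "deriv f 0 = 1"
    and fnz: "\<And>z. z \<in> unit_disk - {0} \<Longrightarrow> f z \<noteq> 0"
    and fre: "\<And>z. z \<in> unit_disk - {0} \<Longrightarrow> Re (exp (\<i> * of_real \<alpha>) * z * deriv f z / f z) > lam * cos \<alpha>"
    using f unfolding spirallike_def class_A_def by auto
  define h where "h = (\<lambda>z. if z = 0 then deriv f 0 else (f z - f 0) / (z - 0))"
  have hh: "h holomorphic_on unit_disk" unfolding h_def by (rule pole_lemma_open[OF fh open_ball])
  have h0: "h 0 = 1" using df0 by (simp add: h_def)
  have hnz: "h w \<noteq> 0" if "w \<in> unit_disk" for w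
    using fnz[of w] that h0 by (cases "w = 0") (auto simp: h_def f0)
  obtain Lh where Lh: "Lh holomorphic_on unit_disk" "Lh 0 = 0" "\<And>w. w \<in> unit_disk \<Longrightarrow> exp (Lh w) = h w"
    using log_exists0[OF hh hnz h0] by blast
  have fz: "f w = w * exp (Lh w)" if "w \<in> unit_disk" for w
    using Lh(3)[OF that] f0 by (cases "w = 0") (auto simp: h_def)
  have df: "deriv f w = exp (Lh w) + w * (deriv Lh w * exp (Lh w))" if w: "w \<in> unit_disk" for w
  proof -
    have "((\<lambda>w. w * exp (Lh w)) has_field_derivative (exp (Lh w) + w * (deriv Lh w * exp (Lh w)))) (at w)"
      using holomorphic_derivI[OF Lh(1) open_ball w]
      by (auto intro!: derivative_eq_intros simp: algebra_simps)
    then have "(f has_field_derivative (exp (Lh w) + w * (deriv Lh w * exp (Lh w)))) (at w)"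
      by (rule has_field_derivative_transform_within_open[OF _ open_ball w]) (simp add: fz)
    then show ?thesis by (rule DERIV_imp_deriv)
  qed
  define M where "M = (\<lambda>w. Lh w / \<gamma>)"
  define hk where "hk = (\<lambda>w. exp (M w))"
  define k where "k = (\<lambda>z. contour_integral (linepath 0 z) hk)"
  have Mh: "M holomorphic_on unit_disk" unfolding M_def using Lh(1) g0 by (intro holomorphic_intros)
  have hkh: "hk holomorphic_on unit_disk" unfolding hk_def using Mh by (intro holomorphic_intros)
  have dk: "(k has_field_derivative hk z) (at z)" if "z \<in> unit_disk" for z
    unfolding k_def by (rule primitive0[OF hkh that])
  have dkeq: "deriv k z = exp (M z)" if "z \<in> unit_disk" for z
    using DERIV_imp_deriv[OF dk[OF that]] by (simp add: hk_def)
  have dM: "deriv M z = deriv Lh z / \<gamma>" if z: "z \<in> unit_disk" for z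
  proof -
    have "(M has_field_derivative deriv Lh z / \<gamma>) (at z)"
      unfolding M_def using holomorphic_derivI[OF Lh(1) open_ball z] g0
      by (auto intro!: derivative_eq_intros)
    then show ?thesis by (rule DERIV_imp_deriv)
  qed
  have ddk: "deriv (deriv k) z = deriv Lh z / \<gamma> * exp (M z)" if z: "z \<in> unit_disk" for z
    using DERIV_imp_deriv[OF deriv_exp_comp[OF Mh dkeq z]] dM[OF z] by simp
  have kh: "k holomorphic_on unit_disk"
    unfolding holomorphic_on_open[OF open_ball] using dk by blast
  have dk0: "deriv k 0 = 1" using dkeq[of 0] Lh(2) by (simp add: M_def)
  have kC: "k \<in> convex_order lam"
    unfolding convex_order_def class_A_def
  proof (intro CollectI conjI ballI)
    show "k holomorphic_on unit_disk" by (rule kh)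
    show "k 0 = 0" by (simp add: k_def)
    show "deriv k 0 = 1" by (rule dk0)
    fix z assume z: "z \<in> unit_disk"
    show "deriv k z \<noteq> 0" using dkeq[OF z] by simp
  next
    fix z assume z: "z \<in> unit_disk"
    have e: "1 + z * deriv (deriv k) z / deriv k z = 1 + (z * deriv Lh z) / \<gamma>"
      using ddk[OF z] dkeq[OF z] by simp
    show "Re (1 + z * deriv (deriv k) z / deriv k z) > lam"
    proof (cases "z = 0")
      case True then show ?thesis using e lam by simp
    next
      case False
      have "exp (\<i> * of_real \<alpha>) * z * deriv f z / f z = exp (\<i> * of_real \<alpha>) * (1 + z * deriv Lh z)"
        using False df[OF z] fz[OF z] by (simp add: field_simps)
      then have "Re (exp (\<i> * of_real \<alpha>) * (1 + z * deriv Lh z)) > lam * cos \<alpha>"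
        using fre[of z] z False by simp
      then show ?thesis unfolding e \<gamma>_def by (rule alg1[OF c])
    qed
  qed
  have kd: "deriv k holomorphic_on unit_disk" by (rule holomorphic_deriv[OF kh open_ball])
  have ldbk: "log_deriv_branch k holomorphic_on unit_disk \<and> log_deriv_branch k 0 = 0 \<and>
         (\<forall>w\<in>unit_disk. exp (log_deriv_branch k w) = deriv k w)"
    by (rule ldb[OF kd]) (use dkeq dk0 in auto)
  have ldbM: "log_deriv_branch k w = M w" if "w \<in> unit_disk" for w
    by (rule log_unique[OF _ Mh _ _ that]) (use ldbk dkeq Lh(2) in \<open>auto simp: M_def\<close>)
  show ?thesis
  proof (intro bexI[OF _ kC] ext)
    fix z
    show "restrict (alexander f) unit_disk z = restrict (I_transform \<gamma> k) unit_disk z"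
    proof (cases "z \<in> unit_disk")
      case False then show ?thesis by simp
    next
      case True
      have seg: "path_image (linepath 0 z) \<subseteq> unit_disk"
        using True by (simp add: closed_segment_subset)
      have "I_transform \<gamma> k z = contour_integral (linepath 0 z) h"
        unfolding I_transform_def
      proof (rule contour_integral_eq)
        fix w assume "w \<in> path_image (linepath 0 z)"
        then have w: "w \<in> unit_disk" using seg by blast
        show "exp (\<gamma> * log_deriv_branch k w) = h w"
          using ldbM[OF w] Lh(3)[OF w] g0 by (simp add: M_def)
      qed
      moreover have "alexander f z = contour_integral (linepath 0 z) h"
        unfolding alexander_def by (rule spike0) (simp add: h_def f0)
      ultimately show ?thesis using True by simp
    qed
  qed
qed

lemma dir2:
  fixes \<alpha> lam :: real
  assumes c: "cos \<alpha> > 0" and k: "k \<in> convex_order lam"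
  defines "\<gamma> \<equiv> exp (- (\<i> * of_real \<alpha>)) * of_real (cos \<alpha>)"
  shows "\<exists>f\<in>spirallike \<alpha> lam. restrict (alexander f) unit_disk = restrict (I_transform \<gamma> k) unit_disk"
proof -
  have kh: "k holomorphic_on unit_disk" and dk0: "deriv k 0 = 1"
    and dknz: "\<And>z. z \<in> unit_disk \<Longrightarrow> deriv k z \<noteq> 0"
    and kre: "\<And>z. z \<in> unit_disk \<Longrightarrow> Re (1 + z * deriv (deriv k) z / deriv k z) > lam"
    using k unfolding convex_order_def class_A_def by auto
  have kd: "deriv k holomorphic_on unit_disk" by (rule holomorphic_deriv[OF kh open_ball])
  define L where "L = log_deriv_branch k"
  have LL: "L holomorphic_on unit_disk" "L 0 = 0" "\<And>w. w \<in> unit_disk \<Longrightarrow> exp (L w) = deriv k w"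
    using ldb[OF kd dknz dk0] unfolding L_def by auto
  define h where "h = (\<lambda>w. exp (\<gamma> * L w))"
  define f where "f = (\<lambda>w. w * h w)"
  have ddk: "deriv (deriv k) z = deriv L z * deriv k z" if z: "z \<in> unit_disk" for z
    using DERIV_imp_deriv[OF deriv_exp_comp[OF LL(1) _ z, of "deriv k"]] LL(3) z by simp
  have dfD: "(f has_field_derivative h w * (1 + \<gamma> * (w * deriv L w))) (at w)" if w: "w \<in> unit_disk" for w
    unfolding f_def h_def using holomorphic_derivI[OF LL(1) open_ball w]
    by (auto intro!: derivative_eq_intros simp: algebra_simps)
  have df: "deriv f w = h w * (1 + \<gamma> * (w * deriv L w))" if w: "w \<in> unit_disk" for w
    by (rule DERIV_imp_deriv[OF dfD[OF w]])
  have fS: "f \<in> spirallike \<alpha> lam"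
    unfolding spirallike_def class_A_def
  proof (intro CollectI conjI ballI)
    show "f holomorphic_on unit_disk" unfolding f_def h_def using LL(1) by (intro holomorphic_intros)
    show "f 0 = 0" by (simp add: f_def)
    show "deriv f 0 = 1" using df[of 0] LL(2) by (simp add: h_def)
    fix z assume z: "z \<in> unit_disk - {0}"
    show "f z \<noteq> 0" using z by (simp add: f_def h_def)
  next
    fix z assume z: "z \<in> unit_disk - {0}"
    then have zD: "z \<in> unit_disk" and z0: "z \<noteq> 0" by auto
    have e1: "z * deriv (deriv k) z / deriv k z = z * deriv L z"
      using ddk[OF zD] dknz[OF zD] by simp
    have e2: "exp (\<i> * of_real \<alpha>) * z * deriv f z / f z
            = exp (\<i> * of_real \<alpha>) * (1 + \<gamma> * (z * deriv L z))"
      using df[OF zD] z0 by (simp add: f_def h_def)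
    have "Re (1 + z * deriv L z) > lam" using kre[OF zD] e1 by simp
    from alg2[OF c this]
    show "Re (exp (\<i> * of_real \<alpha>) * z * deriv f z / f z) > lam * cos \<alpha>"
      unfolding e2 \<gamma>_def by (simp add: mult.assoc)
  qed
  show ?thesis
  proof (intro bexI[OF _ fS] ext)
    fix z
    have "alexander f z = I_transform \<gamma> k z"
      unfolding alexander_def I_transform_def
      by (rule spike0) (simp add: f_def h_def L_def)
    then show "restrict (alexander f) unit_disk z = restrict (I_transform \<gamma> k) unit_disk z"
      by simp
  qed
qed

theorem lemma2p2:
  fixes \<alpha> lam :: real
  assumes "- (pi / 2) < \<alpha>" and "\<alpha> < pi / 2" and "lam < 1"
  shows "{restrict (alexander f) unit_disk | f. f \<in> spirallike \<alpha> lam} =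
         {restrict (I_transform (exp (- (\<i> * of_real \<alpha>)) * of_real (cos \<alpha>)) k) unit_disk
            | k. k \<in> convex_order lam}"
proof -
  have c: "cos \<alpha> > 0" using assms by (intro cos_gt_zero_pi) auto
  show ?thesis
  proof (intro equalityI subsetI)
    fix F assume "F \<in> {restrict (alexander f) unit_disk | f. f \<in> spirallike \<alpha> lam}"
    then obtain f where F: "F = restrict (alexander f) unit_disk" "f \<in> spirallike \<alpha> lam" by blast
    from dir1[OF c F(2) assms(3)] F(1) show "F \<in> {restrict (I_transform (exp (- (\<i> * of_real \<alpha>)) * of_real (cos \<alpha>)) k) unit_disk
            | k. k \<in> convex_order lam}" by auto
  next
    fix F assume "F \<in> {restrict (I_transform (exp (- (\<i> * of_real \<alpha>)) * of_real (cos \<alpha>)) k) unit_disk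
            | k. k \<in> convex_order lam}"
    then obtain k where F: "F = restrict (I_transform (exp (- (\<i> * of_real \<alpha>)) * of_real (cos \<alpha>)) k) unit_disk"
      "k \<in> convex_order lam" by blast
    from dir2[OF c F(2)] F(1) show "F \<in> {restrict (alexander f) unit_disk | f. f \<in> spirallike \<alpha> lam}"
      by (metis (mono_tags, lifting) mem_Collect_eq)
  qed
qed

end
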